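(* Let $G=G(n_1,n_2,p)$ where $1\ll n_1=\lambda n_2$ for a constant $0<\lambda\leq1$, and $p=\frac{d}{\sqrt{n_1n_2}}$ for a constant $d>1$. Then whp there are no small balanced complex components in $G$.
   Context: $G(n_1,n_2,p)$ is the binomial random bipartite graph with partition classes $N_1,N_2$ of sizes $n_1,n_2$, each edge between them present independently with probability $p$. For $p=\frac{d}{\sqrt{n_1n_2}}$ with $d>1$, there exist positive constants $\beta_0,\beta_1$ (from a result of Johansson) such that whp at most one component of $G$ meets $N_1$ in more than $\beta_1\sqrt{n_1\log n_1}$ vertices and no component meets $N_1$ in $k$ vertices with $k\in[\beta_0\log^2 n_1,\beta_1\sqrt{n_1\log n_1}]$; fix such $\beta_0$. A component $C$ is small if $|C\cap N_1|\leq\beta_0\log^2 n_1$, balanced if $|C\cap N_2|\leq 2pn_2|C\cap N_1|$, and complex if it contains more than one cycle. "whp" means with probability tending to $1$ as $n_1\to\infty$. *)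

theory Defs
  imports "HOL-Probability.Probability"
begin

text \<open>Vertices of the bipartite graph: Inl i (i < n1) form N1, Inr j (j < n2) form N2.
  An edge set is a set of pairs (i,j), meaning the edge between Inl i and Inr j.\<close>

definition bip_adj :: "(nat \<times> nat) set \<Rightarrow> nat + nat \<Rightarrow> nat + nat \<Rightarrow> bool" where
  "bip_adj E u v \<longleftrightarrow>
     (\<exists>i j. (i, j) \<in> E \<and> ((u = Inl i \<and> v = Inr j) \<or> (u = Inr j \<and> v = Inl i)))"

definition Gbip :: "nat \<Rightarrow> nat \<Rightarrow> real \<Rightarrow> (nat \<times> nat) set pmf" where
  "Gbip n1 n2 p =
     map_pmf (\<lambda>f. {e. f e}) (Pi_pmf ({..<n1} \<times> {..<n2}) False (\<lambda>_. bernoulli_pmf p))"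

definition bip_vertices :: "nat \<Rightarrow> nat \<Rightarrow> (nat + nat) set" where
  "bip_vertices n1 n2 = Inl ` {..<n1} \<union> Inr ` {..<n2}"

definition bip_components :: "nat \<Rightarrow> nat \<Rightarrow> (nat \<times> nat) set \<Rightarrow> (nat + nat) set set" where
  "bip_components n1 n2 E = {{u. (bip_adj E)\<^sup>*\<^sup>* v u} | v. v \<in> bip_vertices n1 n2}"

definition part1 :: "(nat + nat) set \<Rightarrow> nat set" where
  "part1 C = {i. Inl i \<in> C}"

definition part2 :: "(nat + nat) set \<Rightarrow> nat set" where
  "part2 C = {j. Inr j \<in> C}"

definition edge_verts :: "(nat \<times> nat) set \<Rightarrow> (nat + nat) set" where
  "edge_verts F = Inl ` fst ` F \<union> Inr ` snd ` F"

definition is_cycle :: "(nat \<times> nat) set \<Rightarrow> bool" where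
  "is_cycle F \<longleftrightarrow> finite F \<and> F \<noteq> {} \<and>
     (\<forall>u \<in> edge_verts F. \<forall>v \<in> edge_verts F. (bip_adj F)\<^sup>*\<^sup>* u v) \<and>
     (\<forall>v \<in> edge_verts F. card {e \<in> F. v \<in> edge_verts {e}} = 2)"

definition is_complex :: "(nat \<times> nat) set \<Rightarrow> (nat + nat) set \<Rightarrow> bool" where
  "is_complex E C \<longleftrightarrow> (\<exists>F1 F2. F1 \<noteq> F2 \<and> is_cycle F1 \<and> is_cycle F2 \<and>
      F1 \<subseteq> E \<and> F2 \<subseteq> E \<and> edge_verts F1 \<subseteq> C \<and> edge_verts F2 \<subseteq> C)"

definition is_small :: "real \<Rightarrow> nat \<Rightarrow> (nat + nat) set \<Rightarrow> bool" where
  "is_small \<beta>0 n1 C \<longleftrightarrow> real (card (part1 C)) \<le> \<beta>0 * (ln (real n1))\<^sup>2"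

definition is_balanced :: "real \<Rightarrow> nat \<Rightarrow> (nat + nat) set \<Rightarrow> bool" where
  "is_balanced p n2 C \<longleftrightarrow> real (card (part2 C)) \<le> 2 * p * real n2 * real (card (part1 C))"

definition whp :: "(nat \<Rightarrow> 'a pmf) \<Rightarrow> (nat \<Rightarrow> 'a \<Rightarrow> bool) \<Rightarrow> bool" where
  "whp G Q \<longleftrightarrow> (\<lambda>k. measure_pmf.prob (G k) {x. Q k x}) \<longlonglongrightarrow> 1"

definition johansson_gap ::
  "real \<Rightarrow> (nat \<Rightarrow> nat) \<Rightarrow> (nat \<Rightarrow> nat) \<Rightarrow> (nat \<Rightarrow> real) \<Rightarrow> bool" where
  "johansson_gap \<beta>0 n1 n2 p \<longleftrightarrow> (\<exists>\<beta>1 > 0.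
     whp (\<lambda>k. Gbip (n1 k) (n2 k) (p k)) (\<lambda>k E.
       card {C \<in> bip_components (n1 k) (n2 k) E.
              real (card (part1 C)) > \<beta>1 * sqrt (real (n1 k) * ln (real (n1 k)))} \<le> 1 \<and>
       (\<forall>C \<in> bip_components (n1 k) (n2 k) E.
          \<not> (\<beta>0 * (ln (real (n1 k)))\<^sup>2 \<le> real (card (part1 C)) \<and>
             real (card (part1 C)) \<le> \<beta>1 * sqrt (real (n1 k) * ln (real (n1 k)))))))"

end

theory Submission
  imports Defs "HOL-Real_Asymp.Real_Asymp"
begin


lemma pow_fact_le_exp:
  fixes y :: real assumes "0 \<le> y"
  shows "y ^ n / fact n \<le> exp y"
proof -
  have "y ^ n / fact n = (\<Sum>m\<in>{n}. inverse (fact m) * y ^ m)" by (simp add: field_simps)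
  also have "\<dots> \<le> (\<Sum>m. inverse (fact m) * y ^ m)"
    using assms by (intro sum_le_suminf[OF summable_exp]) auto
  finally show ?thesis by (simp add: exp_def)
qed

lemma prob_witness:
  fixes W Bs :: "(nat \<times> nat) set" and p :: real
  assumes W: "W \<subseteq> {..<n1} \<times> {..<n2}" and B: "Bs \<subseteq> {..<n1} \<times> {..<n2}"
    and disj: "W \<inter> Bs = {}" and p: "0 \<le> p" "p \<le> 1"
  shows "measure_pmf.prob (Gbip n1 n2 p) {E. W \<subseteq> E \<and> E \<inter> Bs = {}} = p ^ card W * (1 - p) ^ card Bs"
proof -
  define G where "G = {..<n1} \<times> {..<n2}"
  define Bx where "Bx = (\<lambda>e. if e \<in> W then {True} else if e \<in> Bs then {False} else (UNIV::bool set))"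
  have fin: "finite G" by (simp add: G_def)
  have pre: "(\<lambda>f. {e. f e}) -` {E. W \<subseteq> E \<and> E \<inter> Bs = {}} = Pi G Bx"
    using W B disj unfolding G_def Bx_def by (auto simp: Pi_def subset_iff; blast)
  have "measure_pmf.prob (Gbip n1 n2 p) {E. W \<subseteq> E \<and> E \<inter> Bs = {}}
      = measure_pmf.prob (Pi_pmf G False (\<lambda>_. bernoulli_pmf p)) (Pi G Bx)"
    unfolding Gbip_def G_def[symmetric] measure_map_pmf pre[symmetric] ..
  also have "\<dots> = (\<Prod>x\<in>G. measure_pmf.prob (bernoulli_pmf p) (Bx x))"
    by (rule measure_Pi_pmf_Pi[OF fin])
  also have "\<dots> = (\<Prod>x\<in>G. if x \<in> W then p else if x \<in> Bs then 1 - p else 1)"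
  proof (rule prod.cong[OF refl])
    fix x
    have t: "measure_pmf.prob (bernoulli_pmf p) {b} = pmf (bernoulli_pmf p) b" for b
      by (rule measure_pmf_single)
    show "measure_pmf.prob (bernoulli_pmf p) (Bx x) = (if x \<in> W then p else if x \<in> Bs then 1 - p else 1)"
      using p by (auto simp: Bx_def t)
  qed
  also have "\<dots> = (\<Prod>x\<in>W \<union> Bs. if x \<in> W then p else if x \<in> Bs then 1 - p else 1)"
    using W B by (intro prod.mono_neutral_right[OF fin]) (auto simp: G_def)
  also have "\<dots> = (\<Prod>x\<in>W. if x \<in> W then p else if x \<in> Bs then 1 - p else 1) *
                  (\<Prod>x\<in>Bs. if x \<in> W then p else if x \<in> Bs then 1 - p else 1)"
  proof (rule prod.union_disjoint)
    show "finite W" using W by (rule finite_subset) simp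
    show "finite Bs" using B by (rule finite_subset) simp
  qed (use disj in auto)
  also have "\<dots> = p ^ card W * (1 - p) ^ card Bs"
  proof -
    have 1: "(\<Prod>x\<in>W. if x \<in> W then p else if x \<in> Bs then 1 - p else 1) = (\<Prod>x\<in>W. p)"
      by (rule prod.cong) auto
    have 2: "(\<Prod>x\<in>Bs. if x \<in> W then p else if x \<in> Bs then 1 - p else 1) = (\<Prod>x\<in>Bs. 1 - p)"
      using disj by (intro prod.cong) auto
    show ?thesis unfolding 1 2 by simp
  qed
  finally show ?thesis .
qed


definition te :: "(nat \<Rightarrow> nat) \<Rightarrow> (nat \<Rightarrow> nat) \<Rightarrow> nat + nat \<Rightarrow> nat \<times> nat" where
  "te p1 p2 u = (case u of Inl i \<Rightarrow> (i, p1 i) | Inr j \<Rightarrow> (p2 j, j))"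

definition Wset :: "nat set \<Rightarrow> nat set \<Rightarrow> (nat \<Rightarrow> nat) \<Rightarrow> (nat \<Rightarrow> nat) \<Rightarrow> nat + nat
   \<Rightarrow> nat \<times> nat \<Rightarrow> nat \<times> nat \<Rightarrow> (nat \<times> nat) set" where
  "Wset S1 S2 p1 p2 r e1 e2 = te p1 p2 ` ((Inl ` S1 \<union> Inr ` S2) - {r}) \<union> {e1, e2}"

definition Bset :: "nat \<Rightarrow> nat \<Rightarrow> nat set \<Rightarrow> nat set \<Rightarrow> (nat \<times> nat) set" where
  "Bset n1 n2 S1 S2 = S1 \<times> ({..<n2} - S2) \<union> ({..<n1} - S1) \<times> S2"

lemma edge_verts_single [simp]: "edge_verts {(i, j)} = {Inl i, Inr j}"
  by (auto simp: edge_verts_def)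

lemma edge_verts_Union: "edge_verts F = (\<Union>e\<in>F. edge_verts {e})"
  by (auto simp: edge_verts_def)

lemma edge_verts_mem: "e \<in> F \<Longrightarrow> edge_verts {e} \<subseteq> edge_verts F"
  by (auto simp: edge_verts_def)

lemma bip_adj_sym: "bip_adj E u w = bip_adj E w u"
  by (auto simp: bip_adj_def)

lemma parity_aux:
  fixes F1 F2 :: "'a set" and P :: "'a \<Rightarrow> bool"
  assumes "finite F1" "finite F2"
    and "card {e \<in> F1. P e} \<in> {0, 2}" "card {e \<in> F2. P e} \<in> {0, 2}"
  shows "card {e \<in> (F1 - F2) \<union> (F2 - F1). P e} \<noteq> 1"
proof -
  have a: "card {e \<in> F1. P e} = card {e \<in> F1 - F2. P e} + card {e \<in> F1 \<inter> F2. P e}"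
    using assms(1) by (subst card_Un_disjoint[symmetric]) (auto intro: arg_cong[where f=card])
  have b: "card {e \<in> F2. P e} = card {e \<in> F2 - F1. P e} + card {e \<in> F1 \<inter> F2. P e}"
    using assms(2) by (subst card_Un_disjoint[symmetric]) (auto intro: arg_cong[where f=card])
  have c: "card {e \<in> (F1 - F2) \<union> (F2 - F1). P e} = card {e \<in> F1 - F2. P e} + card {e \<in> F2 - F1. P e}"
    using assms(1,2) by (subst card_Un_disjoint[symmetric]) (auto intro: arg_cong[where f=card])
  have ar: "\<And>A B C x y z::nat. A = x + z \<Longrightarrow> B = y + z \<Longrightarrow> C = x + y \<Longrightarrow> A \<in> {0,2} \<Longrightarrow> B \<in> {0,2} \<Longrightarrow> C \<noteq> 1"
    by (auto; presburger)
  show ?thesis by (rule ar[OF a b c assms(3,4)])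
qed

lemma comp_basic:
  fixes E :: "(nat \<times> nat) set"
  assumes Egrid: "E \<subseteq> {..<n1} \<times> {..<n2}" and C: "C \<in> bip_components n1 n2 E"
  shows "part1 C \<subseteq> {..<n1}" "part2 C \<subseteq> {..<n2}" "E \<inter> Bset n1 n2 (part1 C) (part2 C) = {}"
    "C \<subseteq> bip_vertices n1 n2"
proof -
  obtain v where v: "v \<in> bip_vertices n1 n2" and Cdef: "C = {u. (bip_adj E)\<^sup>*\<^sup>* v u}"
    using C by (auto simp: bip_components_def)
  have cl: "u \<in> bip_vertices n1 n2" if "(bip_adj E)\<^sup>*\<^sup>* v u" for u
    using that
  proof (induction rule: rtranclp_induct)
    case base then show ?case using v .
  next
    case (step y z)
    from step(2) obtain i j where ij: "(i, j) \<in> E" "(y = Inl i \<and> z = Inr j) \<or> (y = Inr j \<and> z = Inl i)"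
      unfolding bip_adj_def by blast
    have "i < n1" "j < n2" using ij(1) Egrid by auto
    then show ?case using ij(2) unfolding bip_vertices_def by blast
  qed
  show sub: "C \<subseteq> bip_vertices n1 n2" using cl Cdef by blast
  show "part1 C \<subseteq> {..<n1}"
  proof
    fix i assume "i \<in> part1 C"
    then have "Inl i \<in> bip_vertices n1 n2" using sub by (auto simp: part1_def)
    then show "i \<in> {..<n1}" unfolding bip_vertices_def by blast
  qed
  show "part2 C \<subseteq> {..<n2}"
  proof
    fix i assume "i \<in> part2 C"
    then have "Inr i \<in> bip_vertices n1 n2" using sub by (auto simp: part2_def)
    then show "i \<in> {..<n2}" unfolding bip_vertices_def by blast
  qed
  have clo: "w \<in> C" if uw: "u \<in> C" "bip_adj E u w" for u w
  proof -
    have "(bip_adj E)\<^sup>*\<^sup>* v u" using uw(1) Cdef by simp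
    then have "(bip_adj E)\<^sup>*\<^sup>* v w" using uw(2) by (rule rtranclp.rtrancl_into_rtrancl)
    then show ?thesis using Cdef by simp
  qed
  have e1: "Inr j \<in> C" if ij: "(i, j) \<in> E" "Inl i \<in> C" for i j
  proof -
    have "bip_adj E (Inl i) (Inr j)" unfolding bip_adj_def using ij(1) by blast
    then show ?thesis using clo ij(2) by blast
  qed
  have e2: "Inl i \<in> C" if ij: "(i, j) \<in> E" "Inr j \<in> C" for i j
  proof -
    have "bip_adj E (Inr j) (Inl i)" unfolding bip_adj_def using ij(1) by blast
    then show ?thesis using clo ij(2) by blast
  qed
  show "E \<inter> Bset n1 n2 (part1 C) (part2 C) = {}"
  proof (rule ccontr)
    assume "E \<inter> Bset n1 n2 (part1 C) (part2 C) \<noteq> {}"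
    then obtain i j where ij: "(i, j) \<in> E" "(i, j) \<in> Bset n1 n2 (part1 C) (part2 C)" by auto
    then have "(Inl i \<in> C \<and> Inr j \<notin> C) \<or> (Inl i \<notin> C \<and> Inr j \<in> C)"
      by (auto simp: Bset_def part1_def part2_def)
    then show False using e1[OF ij(1)] e2[OF ij(1)] by blast
  qed
qed

lemma edge_in_parts:
  assumes "e \<in> F" "edge_verts F \<subseteq> C"
  shows "e \<in> part1 C \<times> part2 C"
proof -
  obtain a b where e: "e = (a, b)" by (cases e)
  have "a \<in> fst ` F" "b \<in> snd ` F" using assms(1) e by force+
  then have "Inl a \<in> edge_verts F" "Inr b \<in> edge_verts F" unfolding edge_verts_def by blast+
  then have "Inl a \<in> C" "Inr b \<in> C" using assms(2) by blast+
  then show ?thesis using e by (simp add: part1_def part2_def)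
qed

lemma complex_witness:
  fixes E :: "(nat \<times> nat) set"
  assumes Egrid: "E \<subseteq> {..<n1} \<times> {..<n2}" and C: "C \<in> bip_components n1 n2 E"
    and cx: "is_complex E C"
  shows "\<exists>p1 p2 r e1 e2. p1 \<in> part1 C \<rightarrow>\<^sub>E part2 C \<and> p2 \<in> part2 C \<rightarrow>\<^sub>E part1 C \<and>
     r \<in> Inl ` part1 C \<union> Inr ` part2 C \<and> e1 \<in> part1 C \<times> part2 C \<and> e2 \<in> part1 C \<times> part2 C \<and>
     card (Wset (part1 C) (part2 C) p1 p2 r e1 e2) = card (part1 C) + card (part2 C) + 1 \<and>
     Wset (part1 C) (part2 C) p1 p2 r e1 e2 \<subseteq> E"
proof -
  let ?adj = "bip_adj E"
  obtain v where v: "v \<in> bip_vertices n1 n2" and Cdef: "C = {u. ?adj\<^sup>*\<^sup>* v u}"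
    using C by (auto simp: bip_components_def)
  have vC: "v \<in> C" using Cdef by simp
  have finC: "finite C"
    using comp_basic(4)[OF Egrid C] by (rule finite_subset) (simp add: bip_vertices_def)
  define h where "h u = (LEAST m. (?adj ^^ m) v u)" for u
  have h1: "(?adj ^^ h u) v u" if "u \<in> C" for u
  proof -
    have "\<exists>m. (?adj ^^ m) v u" using that Cdef by (simp add: rtranclp_power)
    then obtain m where "(?adj ^^ m) v u" by blast
    then show ?thesis unfolding h_def by (rule LeastI)
  qed
  have h2: "\<exists>w. w \<in> C \<and> ?adj w u \<and> h w < h u" if "u \<in> C" "u \<noteq> v" for u
  proof (cases "h u")
    case 0
    then show ?thesis using h1[OF that(1)] that(2) by simp
  next
    case (Suc m)
    from h1[OF that(1)] Suc have "(?adj ^^ Suc m) v u" by simp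
    then obtain w where w1: "(?adj ^^ m) v w" and w2: "?adj w u" by (rule relpowp_Suc_E)
    have "h w \<le> m" unfolding h_def using w1 by (rule Least_le)
    moreover have "w \<in> C" using w1 Cdef by (auto simp: rtranclp_power)
    ultimately show ?thesis using w2 Suc by auto
  qed
  define par where "par u = (SOME w. w \<in> C \<and> ?adj w u \<and> h w < h u)" for u
  have par: "par u \<in> C \<and> ?adj (par u) u \<and> h (par u) < h u" if "u \<in> C" "u \<noteq> v" for u
    unfolding par_def using someI_ex[OF h2[OF that]] .
  have adjL: "\<exists>j. w = Inr j \<and> (i, j) \<in> E" if "?adj w (Inl i)" for w i
    using that by (auto simp: bip_adj_def)
  have adjR: "\<exists>i. w = Inl i \<and> (i, j) \<in> E" if "?adj w (Inr j)" for w j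
    using that by (auto simp: bip_adj_def)
  obtain F1 F2 where F: "F1 \<noteq> F2" "is_cycle F1" "is_cycle F2" "F1 \<subseteq> E" "F2 \<subseteq> E"
    "edge_verts F1 \<subseteq> C" "edge_verts F2 \<subseteq> C"
    using cx by (auto simp: is_complex_def)
  obtain i0 j0 where ij0: "(i0, j0) \<in> F1" using F(2) by (auto simp: is_cycle_def)
  have i0: "i0 \<in> part1 C" and j0: "j0 \<in> part2 C"
    using edge_in_parts[OF ij0 F(6)] by auto
  define p1 where "p1 = restrict (\<lambda>i. if Inl i = v then j0 else projr (par (Inl i))) (part1 C)"
  define p2 where "p2 = restrict (\<lambda>j. if Inr j = v then i0 else projl (par (Inr j))) (part2 C)"
  have te_prop: "te p1 p2 u \<in> E \<and> edge_verts {te p1 p2 u} = {u, par u}" if uC: "u \<in> C" "u \<noteq> v" for u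
  proof (cases u)
    case (Inl i)
    obtain j where j: "par u = Inr j" "(i, j) \<in> E" using adjL par[OF uC] Inl by blast
    have "i \<in> part1 C" using uC Inl by (simp add: part1_def)
    then have "p1 i = j" using uC Inl j by (simp add: p1_def)
    then show ?thesis using Inl j by (auto simp: te_def)
  next
    case (Inr j)
    obtain i where i: "par u = Inl i" "(i, j) \<in> E" using adjR par[OF uC] Inr by blast
    have "j \<in> part2 C" using uC Inr by (simp add: part2_def)
    then have "p2 j = i" using uC Inr i by (simp add: p2_def)
    then show ?thesis using Inr i by (auto simp: te_def)
  qed
  have Ceq: "C = Inl ` part1 C \<union> Inr ` part2 C"
  proof (rule set_eqI)
    fix u show "u \<in> C \<longleftrightarrow> u \<in> Inl ` part1 C \<union> Inr ` part2 C"
      by (cases u) (auto simp: part1_def part2_def)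
  qed
  define T where "T = te p1 p2 ` (C - {v})"
  have injT: "inj_on (te p1 p2) (C - {v})"
  proof (rule inj_onI)
    fix u w assume u: "u \<in> C - {v}" and w: "w \<in> C - {v}" and eq: "te p1 p2 u = te p1 p2 w"
    show "u = w"
    proof (rule ccontr)
      assume ne: "u \<noteq> w"
      have "{u, par u} = {w, par w}" using te_prop[of u] te_prop[of w] u w eq by auto
      then have "u = par w" "w = par u" using ne by (auto simp: doubleton_eq_iff)
      then show False using par[of u] par[of w] u w by auto
    qed
  qed
  have finT: "finite T" using finC by (simp add: T_def)
  have cardT: "card T = card C - 1"
    unfolding T_def using card_image[OF injT] vC finC by simp
  have cardC: "card C = card (part1 C) + card (part2 C)"
  proof -
    define L where "L = (Inl ` part1 C :: (nat + nat) set)"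
    define R where "R = (Inr ` part2 C :: (nat + nat) set)"
    have f1a: "finite L"
      using comp_basic(1)[OF Egrid C] unfolding L_def by (intro finite_imageI) (rule finite_subset, auto)
    have f1b: "finite R"
      using comp_basic(2)[OF Egrid C] unfolding R_def by (intro finite_imageI) (rule finite_subset, auto)
    have "card C = card (L \<union> R)" using Ceq unfolding L_def R_def by (rule arg_cong)
    also have "\<dots> = card L + card R"
      by (rule card_Un_disjoint[OF f1a f1b]) (auto simp: L_def R_def)
    also have "\<dots> = card (part1 C) + card (part2 C)"
      unfolding L_def R_def by (simp add: card_image)
    finally show ?thesis .
  qed
  have TE: "T \<subseteq> E" using te_prop unfolding T_def by blast
  have leaf: "\<exists>w\<in>edge_verts D. card {e \<in> D. w \<in> edge_verts {e}} = 1" if D: "D \<subseteq> T" "D \<noteq> {}" for D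
  proof -
    define X where "X = edge_verts D"
    have finD: "finite D" using D finT finite_subset by blast
    have finX: "finite X"
      unfolding X_def edge_verts_def using finD by auto
    have XC: "X \<subseteq> C"
    proof
      fix x assume "x \<in> X"
      then obtain e where e: "e \<in> D" "x \<in> edge_verts {e}"
        unfolding X_def by (subst (asm) edge_verts_Union) auto
      then obtain u where u: "u \<in> C - {v}" "e = te p1 p2 u" using D T_def by auto
      show "x \<in> C" using te_prop[of u] u e par[of u] by auto
    qed
    have Xne: "X \<noteq> {}" using D(2) unfolding X_def edge_verts_def by auto
    have "Max (h ` X) \<in> h ` X" using finX Xne by (intro Max_in) auto
    then obtain w where w: "w \<in> X" "h w = Max (h ` X)" by (metis imageE)
    have wmax: "h x \<le> h w" if "x \<in> X" for x
      using w finX that by simp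
    have sub: "e = te p1 p2 w" if e: "e \<in> D" "w \<in> edge_verts {e}" for e
    proof -
      obtain u where u: "u \<in> C - {v}" "e = te p1 p2 u" using e D T_def by auto
      have ev: "edge_verts {e} = {u, par u}" using te_prop[of u] u by auto
      have uX: "u \<in> X" unfolding X_def using e(1) ev by (subst edge_verts_Union) auto
      show ?thesis
      proof (cases "w = u")
        case True then show ?thesis using u by simp
      next
        case False
        then have "w = par u" using e(2) ev by auto
        then show ?thesis using par[of u] u wmax[OF uX] by auto
      qed
    qed
    obtain e0 where e0: "e0 \<in> D" "w \<in> edge_verts {e0}"
      using w(1) unfolding X_def by (subst (asm) edge_verts_Union) auto
    have "{e \<in> D. w \<in> edge_verts {e}} = {te p1 p2 w}"
    proof (intro equalityI subsetI)
      fix e assume "e \<in> {e \<in> D. w \<in> edge_verts {e}}"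
      then show "e \<in> {te p1 p2 w}" using sub by blast
    next
      fix e assume "e \<in> {te p1 p2 w}"
      then show "e \<in> {e \<in> D. w \<in> edge_verts {e}}" using sub[OF e0] e0 by simp
    qed
    then have "card {e \<in> D. w \<in> edge_verts {e}} = 1" by simp
    then show ?thesis using w(1) X_def by blast
  qed
  have cycdeg: "card {e \<in> F. x \<in> edge_verts {e}} \<in> {0, 2}" if "is_cycle F" for F x
  proof (cases "x \<in> edge_verts F")
    case True then show ?thesis using that by (auto simp: is_cycle_def)
  next
    case False
    then have "{e \<in> F. x \<in> edge_verts {e}} = {}" using edge_verts_mem[of _ F] by blast
    then have c0: "card {e \<in> F. x \<in> edge_verts {e}} = 0" by (simp only: card.empty)
    show ?thesis unfolding c0 by simp
  qed
  have noT: "\<not> F \<subseteq> T" if "is_cycle F" for F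
  proof
    assume "F \<subseteq> T"
    moreover have "F \<noteq> {}" using that by (auto simp: is_cycle_def)
    ultimately obtain w where "w \<in> edge_verts F" "card {e \<in> F. w \<in> edge_verts {e}} = 1"
      using leaf by blast
    then show False using that by (auto simp: is_cycle_def)
  qed
  obtain e1 where e1: "e1 \<in> F1" "e1 \<notin> T" using noT[OF F(2)] by auto
  obtain e1' where e1': "e1' \<in> F2" "e1' \<notin> T" using noT[OF F(3)] by auto
  have "\<exists>e2. e2 \<in> F1 \<union> F2 \<and> e2 \<notin> T \<and> e2 \<noteq> e1"
  proof (rule ccontr)
    assume na: "\<not> ?thesis"
    define D where "D = (F1 - F2) \<union> (F2 - F1)"
    have "e1' = e1" using na e1' by blast
    then have "e1 \<in> F2" using e1' by simp
    then have DT: "D \<subseteq> T" using na e1 unfolding D_def by blast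
    have "D \<noteq> {}" using F(1) unfolding D_def by auto
    then obtain w where "card {e \<in> D. w \<in> edge_verts {e}} = 1" using leaf DT by blast
    moreover have "finite F1" "finite F2" using F(2,3) by (auto simp: is_cycle_def)
    ultimately show False
      using parity_aux[of F1 F2 "\<lambda>e. w \<in> edge_verts {e}"] cycdeg[OF F(2)] cycdeg[OF F(3)]
      unfolding D_def by auto
  qed
  then obtain e2 where e2: "e2 \<in> F1 \<union> F2" "e2 \<notin> T" "e2 \<noteq> e1" by blast
  have e1P: "e1 \<in> part1 C \<times> part2 C" using edge_in_parts[OF e1(1) F(6)] .
  have e2P: "e2 \<in> part1 C \<times> part2 C" using edge_in_parts[of e2 F1 C] edge_in_parts[of e2 F2 C] e2(1) F(6,7) by auto
  have Weq: "Wset (part1 C) (part2 C) p1 p2 v e1 e2 = T \<union> {e1, e2}"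
    unfolding Wset_def T_def using Ceq by simp
  have cardW: "card (T \<union> {e1, e2}) = card T + 2"
    using finT e1 e2 by (simp add: card_insert_if)
  have c1: "card C \<ge> 1" using vC finC by (metis One_nat_def Suc_leI card_gt_0_iff empty_iff)
  have p1P: "p1 \<in> part1 C \<rightarrow>\<^sub>E part2 C"
  proof -
    have "(if Inl i = v then j0 else projr (par (Inl i))) \<in> part2 C" if "i \<in> part1 C" for i
    proof (cases "Inl i = v")
      case False
      have iC: "Inl i \<in> C" using that by (simp add: part1_def)
      obtain j where "par (Inl i) = Inr j" using adjL par[OF iC False] by blast
      then show ?thesis using par[OF iC False] False by (simp add: part2_def)
    qed (use j0 in simp)
    then show ?thesis unfolding p1_def by auto
  qed
  have p2P: "p2 \<in> part2 C \<rightarrow>\<^sub>E part1 C"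
  proof -
    have "(if Inr j = v then i0 else projl (par (Inr j))) \<in> part1 C" if "j \<in> part2 C" for j
    proof (cases "Inr j = v")
      case False
      have jC: "Inr j \<in> C" using that by (simp add: part2_def)
      obtain i where "par (Inr j) = Inl i" using adjR par[OF jC False] by blast
      then show ?thesis using par[OF jC False] False by (simp add: part1_def)
    qed (use i0 in simp)
    then show ?thesis unfolding p2_def by auto
  qed
  have e1E: "e1 \<in> E" using e1 F(4) by auto
  have e2E: "e2 \<in> E" using e2 F(4,5) by auto
  show ?thesis
  proof (intro exI conjI)
    show "p1 \<in> part1 C \<rightarrow>\<^sub>E part2 C" by (rule p1P)
    show "p2 \<in> part2 C \<rightarrow>\<^sub>E part1 C" by (rule p2P)
    show "v \<in> Inl ` part1 C \<union> Inr ` part2 C" using vC Ceq by blast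
    show "e1 \<in> part1 C \<times> part2 C" by (rule e1P)
    show "e2 \<in> part1 C \<times> part2 C" by (rule e2P)
    show "card (Wset (part1 C) (part2 C) p1 p2 v e1 e2) = card (part1 C) + card (part2 C) + 1"
      unfolding Weq cardW cardT cardC[symmetric] using c1 by simp
    show "Wset (part1 C) (part2 C) p1 p2 v e1 e2 \<subseteq> E"
      unfolding Weq using TE e1E e2E by auto
  qed
qed



lemma binom_le_real: "real (n choose a) \<le> real n ^ a / fact a"
proof -
  have "(n choose a) * fact a \<le> n ^ a" by (rule binomial_fact_pow)
  then have "real ((n choose a) * fact a) \<le> real (n ^ a)" by (rule of_nat_mono)
  then have "real (n choose a) * fact a \<le> real n ^ a" by simp
  then show ?thesis by (simp add: field_simps)
qed

lemma X_le_1: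
  fixes p :: real and n a b :: nat assumes p: "0 \<le> p"
  shows "real (n choose a) * real b ^ a * p ^ a * exp (- (p * real b * real n)) \<le> 1"
proof -
  define y where "y = real n * real b * p"
  have y0: "0 \<le> y" using p by (simp add: y_def)
  have "real (n choose a) * real b ^ a * p ^ a \<le> real n ^ a / fact a * real b ^ a * p ^ a"
    using binom_le_real[of n a] p by (intro mult_right_mono) auto
  also have "\<dots> = y ^ a / fact a" by (simp add: y_def power_mult_distrib)
  also have "\<dots> \<le> exp y" by (rule pow_fact_le_exp[OF y0])
  finally have "real (n choose a) * real b ^ a * p ^ a \<le> exp y" .
  then have "real (n choose a) * real b ^ a * p ^ a * exp (- y) \<le> exp y * exp (- y)"
    by (intro mult_right_mono) auto
  also have "\<dots> = 1" by (simp add: exp_minus_inverse)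
  finally show ?thesis by (simp add: y_def mult_ac)
qed

lemma term_bound:
  fixes p :: real and n1 n2 a b :: nat assumes p: "0 \<le> p" "p \<le> 1"
  shows "real (n1 choose a) * real (n2 choose b) *
     (real b ^ a * real a ^ b * real (a + b) * (real a * real b) ^ 2 * p ^ (a + b + 1) *
      (1 - p) ^ (a * (n2 - b) + b * (n1 - a)))
     \<le> real (a + b) * (real a * real b) ^ 2 * p * exp (2 * p * real a * real b)"
    (is "?L \<le> ?R")
proof (cases "a \<le> n1 \<and> b \<le> n2")
  case False
  then have z: "real (n1 choose a) * real (n2 choose b) = 0" by auto
  have "?L = 0" by (simp only: z mult_zero_left)
  moreover have "?R \<ge> 0" using p by simp
  ultimately show ?thesis by linarith
next
  case True
  define m where "m = a * (n2 - b) + b * (n1 - a)"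
  have mr: "real m = real a * real n2 + real b * real n1 - 2 * real a * real b"
  proof -
    have d1: "real (n2 - b) = real n2 - real b" using True by (simp add: of_nat_diff)
    have d2: "real (n1 - a) = real n1 - real a" using True by (simp add: of_nat_diff)
    have "real m = real a * real (n2 - b) + real b * real (n1 - a)"
      unfolding m_def by (simp only: of_nat_add of_nat_mult)
    then show ?thesis unfolding d1 d2 by (simp add: algebra_simps)
  qed
  have q: "(1 - p) ^ m \<le> exp (- p * real m)"
  proof -
    have "(1 - p) ^ m \<le> exp (- p) ^ m"
      using p by (intro power_mono) (auto simp: exp_ge_add_one_self[of "-p", simplified])
    also have "\<dots> = exp (- p * real m)" by (simp add: exp_of_nat_mult[symmetric] mult_ac)
    finally show ?thesis .
  qed
  define X1 where "X1 = real (n1 choose a) * real b ^ a * p ^ a * exp (- (p * real b * real n1))"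
  define X2 where "X2 = real (n2 choose b) * real a ^ b * p ^ b * exp (- (p * real a * real n2))"
  have X1: "X1 \<le> 1" "0 \<le> X1" unfolding X1_def using X_le_1[OF p(1)] p by auto
  have X2: "X2 \<le> 1" "0 \<le> X2" unfolding X2_def using X_le_1[OF p(1)] p by auto
  define R where "R = real (a + b) * (real a * real b) ^ 2 * p"
  have R0: "R \<ge> 0" using p by (simp add: R_def)
  have "?L = (real (n1 choose a) * real b ^ a * p ^ a) * (real (n2 choose b) * real a ^ b * p ^ b) * R * (1 - p) ^ m"
    by (simp add: R_def m_def power_add mult_ac)
  also have "\<dots> \<le> (real (n1 choose a) * real b ^ a * p ^ a) * (real (n2 choose b) * real a ^ b * p ^ b) * R * exp (- p * real m)"
    using q p R0 by (intro mult_left_mono) auto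
  also have "\<dots> = X1 * X2 * (R * exp (2 * p * real a * real b))"
    unfolding X1_def X2_def mr by (simp add: exp_add[symmetric] exp_diff algebra_simps)
  also have "\<dots> \<le> 1 * 1 * (R * exp (2 * p * real a * real b))"
    using X1 X2 R0 by (intro mult_right_mono mult_mono) auto
  also have "\<dots> = ?R" by (simp add: R_def)
  finally show ?thesis .
qed

lemma sum_subsets_card:
  fixes g :: "nat \<Rightarrow> real"
  assumes "finite A"
  shows "(\<Sum>S\<in>{S. S \<subseteq> A \<and> card S \<le> m}. g (card S)) = (\<Sum>a\<le>m. real (card A choose a) * g a)"
proof -
  have eq: "{S. S \<subseteq> A \<and> card S \<le> m} = (\<Union>a\<in>{..m}. {S. S \<subseteq> A \<and> card S = a})" by auto
  have fin: "finite {S. S \<subseteq> A \<and> card S = a}" for a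
    using assms by (rule finite_subset[rotated, OF finite_Collect_subsets]) auto
  have "(\<Sum>S\<in>{S. S \<subseteq> A \<and> card S \<le> m}. g (card S)) = (\<Sum>a\<le>m. \<Sum>S\<in>{S. S \<subseteq> A \<and> card S = a}. g (card S))"
    unfolding eq by (rule sum.UNION_disjoint) (auto simp: fin)
  also have "\<dots> = (\<Sum>a\<le>m. \<Sum>S\<in>{S. S \<subseteq> A \<and> card S = a}. g a)"
    by (intro sum.cong refl) auto
  also have "\<dots> = (\<Sum>a\<le>m. real (card A choose a) * g a)"
    using n_subsets[OF assms] by simp
  finally show ?thesis .
qed



lemma Gbip_support:
  assumes "E \<in> set_pmf (Gbip n1 n2 p)"
  shows "E \<subseteq> {..<n1} \<times> {..<n2}"
proof -
  obtain f where f: "f \<in> set_pmf (Pi_pmf ({..<n1} \<times> {..<n2}) False (\<lambda>_. bernoulli_pmf p))"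
    and E: "E = {e. f e}"
    using assms unfolding Gbip_def by auto
  have "\<forall>x. x \<notin> {..<n1} \<times> {..<n2} \<longrightarrow> f x = False"
    using set_Pi_pmf_subset[of "{..<n1} \<times> {..<n2}" False "\<lambda>_. bernoulli_pmf p"] f by auto
  then show ?thesis using E by auto
qed

lemma Wset_sub:
  assumes "p1 \<in> S1 \<rightarrow>\<^sub>E S2" "p2 \<in> S2 \<rightarrow>\<^sub>E S1" "e1 \<in> S1 \<times> S2" "e2 \<in> S1 \<times> S2"
  shows "Wset S1 S2 p1 p2 r e1 e2 \<subseteq> S1 \<times> S2"
  using assms unfolding Wset_def te_def by (auto simp: PiE_iff)

lemma card_Bset:
  assumes "S1 \<subseteq> {..<n1}" "S2 \<subseteq> {..<n2}"
  shows "card (Bset n1 n2 S1 S2) = card S1 * (n2 - card S2) + card S2 * (n1 - card S1)"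
proof -
  have f1: "finite S1" "finite S2" using assms finite_subset by blast+
  have "card (Bset n1 n2 S1 S2) = card (S1 \<times> ({..<n2} - S2)) + card (({..<n1} - S1) \<times> S2)"
    unfolding Bset_def using f1 by (intro card_Un_disjoint) auto
  also have "\<dots> = card S1 * (n2 - card S2) + (n1 - card S1) * card S2"
    using assms f1 by (simp add: card_cartesian_product card_Diff_subset)
  finally show ?thesis by simp
qed

lemma card_Dom:
  assumes "finite S1" "finite S2"
  shows "card ((S1 \<rightarrow>\<^sub>E S2) \<times> (S2 \<rightarrow>\<^sub>E S1) \<times> ((Inl ` S1 \<union> Inr ` S2) :: (nat + nat) set) \<times> (S1 \<times> S2) \<times> (S1 \<times> S2))
    = card S2 ^ card S1 * card S1 ^ card S2 * (card S1 + card S2) * (card S1 * card S2) * (card S1 * card S2)"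
proof -
  have c1: "card (S1 \<rightarrow>\<^sub>E S2) = card S2 ^ card S1" using assms by (simp add: card_PiE)
  have c2: "card (S2 \<rightarrow>\<^sub>E S1) = card S1 ^ card S2" using assms by (simp add: card_PiE)
  have c3: "card ((Inl ` S1 \<union> Inr ` S2) :: (nat + nat) set) = card S1 + card S2"
    using assms by (subst card_Un_disjoint) (auto simp: card_image)
  show ?thesis using assms by (simp add: card_cartesian_product c1 c2 c3)
qed

lemma bad_bound:
  fixes p :: real and n1 n2 Ma Kb :: nat
  assumes p: "0 \<le> p" "p \<le> 1"
  shows "measure_pmf.prob (Gbip n1 n2 p) {E. \<exists>C\<in>bip_components n1 n2 E.
            card (part1 C) \<le> Ma \<and> card (part2 C) \<le> Kb \<and> is_complex E C}
     \<le> (\<Sum>a\<le>Ma. \<Sum>b\<le>Kb. real (a + b) * (real a * real b) ^ 2 * p * exp (2 * p * real a * real b))"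
proof -
  define M where "M = Gbip n1 n2 p"
  define bad where "bad = {E. \<exists>C\<in>bip_components n1 n2 E.
            card (part1 C) \<le> Ma \<and> card (part2 C) \<le> Kb \<and> is_complex E C}"
  define A1 where "A1 = {S1. S1 \<subseteq> {..<n1} \<and> card S1 \<le> Ma}"
  define A2 where "A2 = {S2. S2 \<subseteq> {..<n2} \<and> card S2 \<le> Kb}"
  define Dom :: "nat set \<Rightarrow> nat set \<Rightarrow> ((nat \<Rightarrow> nat) \<times> (nat \<Rightarrow> nat) \<times> (nat + nat) \<times> (nat \<times> nat) \<times> (nat \<times> nat)) set"
    where "Dom S1 S2 = (S1 \<rightarrow>\<^sub>E S2) \<times> (S2 \<rightarrow>\<^sub>E S1) \<times> (Inl ` S1 \<union> Inr ` S2) \<times> (S1 \<times> S2) \<times> (S1 \<times> S2)" for S1 S2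
  define Ev where "Ev S1 S2 w = (case w of (p1, p2, r, e1, e2) \<Rightarrow>
      if card (Wset S1 S2 p1 p2 r e1 e2) = card S1 + card S2 + 1
      then {E. Wset S1 S2 p1 p2 r e1 e2 \<subseteq> E \<and> E \<inter> Bset n1 n2 S1 S2 = {}} else {})" for S1 S2 w
  define Inner where "Inner x = (\<Union>w\<in>Dom (fst x) (snd x). Ev (fst x) (snd x) w)" for x
  define F where "F a b = real b ^ a * real a ^ b * real (a + b) * (real a * real b) ^ 2 * p ^ (a + b + 1) *
      (1 - p) ^ (a * (n2 - b) + b * (n1 - a))" for a b
  have finA1: "finite A1" unfolding A1_def by (rule finite_subset[of _ "Pow {..<n1}"]) auto
  have finA2: "finite A2" unfolding A2_def by (rule finite_subset[of _ "Pow {..<n2}"]) auto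
  have sub: "bad \<inter> set_pmf M \<subseteq> (\<Union>x\<in>A1 \<times> A2. Inner x)"
  proof
    fix E assume "E \<in> bad \<inter> set_pmf M"
    then obtain C where C: "C \<in> bip_components n1 n2 E" "card (part1 C) \<le> Ma" "card (part2 C) \<le> Kb"
      "is_complex E C" and EM: "E \<in> set_pmf M" unfolding bad_def by auto
    have Eg: "E \<subseteq> {..<n1} \<times> {..<n2}" using EM Gbip_support unfolding M_def by blast
    note cb = comp_basic[OF Eg C(1)]
    obtain p1 p2 r e1 e2 where w: "p1 \<in> part1 C \<rightarrow>\<^sub>E part2 C" "p2 \<in> part2 C \<rightarrow>\<^sub>E part1 C"
      "r \<in> Inl ` part1 C \<union> Inr ` part2 C" "e1 \<in> part1 C \<times> part2 C" "e2 \<in> part1 C \<times> part2 C"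
      "card (Wset (part1 C) (part2 C) p1 p2 r e1 e2) = card (part1 C) + card (part2 C) + 1"
      "Wset (part1 C) (part2 C) p1 p2 r e1 e2 \<subseteq> E"
      using complex_witness[OF Eg C(1) C(4)] by blast
    have x: "(part1 C, part2 C) \<in> A1 \<times> A2" using cb C unfolding A1_def A2_def by auto
    have "(p1, p2, r, e1, e2) \<in> Dom (part1 C) (part2 C)" using w unfolding Dom_def by auto
    moreover have "E \<in> Ev (part1 C) (part2 C) (p1, p2, r, e1, e2)"
      using w cb unfolding Ev_def by auto
    ultimately have "E \<in> Inner (part1 C, part2 C)" unfolding Inner_def by auto
    then show "E \<in> (\<Union>x\<in>A1 \<times> A2. Inner x)" using x by blast
  qed
  have inner: "measure_pmf.prob M (Inner x) \<le> F (card (fst x)) (card (snd x))" if x: "x \<in> A1 \<times> A2" for x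
  proof -
    obtain S1 S2 where xs: "x = (S1, S2)" by (cases x)
    have S: "S1 \<subseteq> {..<n1}" "S2 \<subseteq> {..<n2}" using x xs unfolding A1_def A2_def by auto
    have fS: "finite S1" "finite S2" using S finite_subset by blast+
    define a where "a = card S1"
    define b where "b = card S2"
    have finD: "finite (Dom S1 S2)" unfolding Dom_def using fS by (intro finite_cartesian_product finite_PiE) auto
    have ev: "measure_pmf.prob M (Ev S1 S2 w) \<le> p ^ (a + b + 1) * (1 - p) ^ (a * (n2 - b) + b * (n1 - a))"
      if w: "w \<in> Dom S1 S2" for w
    proof -
      obtain p1 p2 r e1 e2 where ww: "w = (p1, p2, r, e1, e2)" by (cases w)
      have ws: "Wset S1 S2 p1 p2 r e1 e2 \<subseteq> S1 \<times> S2"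
        using w ww unfolding Dom_def by (intro Wset_sub) auto
      have nn: "0 \<le> p ^ (a + b + 1) * (1 - p) ^ (a * (n2 - b) + b * (n1 - a))" using p by simp
      show ?thesis
      proof (cases "card (Wset S1 S2 p1 p2 r e1 e2) = card S1 + card S2 + 1")
        case True
        have "measure_pmf.prob M (Ev S1 S2 w) = measure_pmf.prob M {E. Wset S1 S2 p1 p2 r e1 e2 \<subseteq> E \<and> E \<inter> Bset n1 n2 S1 S2 = {}}"
          unfolding Ev_def ww using True by simp
        also have "\<dots> = p ^ card (Wset S1 S2 p1 p2 r e1 e2) * (1 - p) ^ card (Bset n1 n2 S1 S2)"
          unfolding M_def
        proof (rule prob_witness)
          show "Wset S1 S2 p1 p2 r e1 e2 \<subseteq> {..<n1} \<times> {..<n2}" using ws S by blast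
          show "Bset n1 n2 S1 S2 \<subseteq> {..<n1} \<times> {..<n2}" using S by (auto simp: Bset_def)
          show "Wset S1 S2 p1 p2 r e1 e2 \<inter> Bset n1 n2 S1 S2 = {}" using ws by (auto simp: Bset_def)
        qed (use p in auto)
        also have "\<dots> = p ^ (a + b + 1) * (1 - p) ^ (a * (n2 - b) + b * (n1 - a))"
          using True card_Bset[OF S] unfolding a_def b_def by simp
        finally show ?thesis by simp
      next
        case False
        then have "Ev S1 S2 w = {}" unfolding Ev_def ww by simp
        then show ?thesis using nn by simp
      qed
    qed
    have "measure_pmf.prob M (Inner x) \<le> (\<Sum>w\<in>Dom S1 S2. measure_pmf.prob M (Ev S1 S2 w))"
      unfolding Inner_def xs fst_conv snd_conv using finD by (intro measure_UNION_le) auto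
    also have "\<dots> \<le> (\<Sum>w\<in>Dom S1 S2. p ^ (a + b + 1) * (1 - p) ^ (a * (n2 - b) + b * (n1 - a)))"
      using ev by (intro sum_mono) auto
    also have "\<dots> = real (card (Dom S1 S2)) * (p ^ (a + b + 1) * (1 - p) ^ (a * (n2 - b) + b * (n1 - a)))"
      by simp
    also have "\<dots> = F a b"
      unfolding Dom_def card_Dom[OF fS] F_def a_def[symmetric] b_def[symmetric]
      by (simp add: power2_eq_square mult_ac)
    finally show ?thesis using xs a_def b_def by simp
  qed
  have "measure_pmf.prob M bad = measure_pmf.prob M (bad \<inter> set_pmf M)"
    by (simp add: measure_Int_set_pmf)
  also have "\<dots> \<le> measure_pmf.prob M (\<Union>x\<in>A1 \<times> A2. Inner x)"
    using sub by (intro measure_pmf.finite_measure_mono) auto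
  also have "\<dots> \<le> (\<Sum>x\<in>A1 \<times> A2. measure_pmf.prob M (Inner x))"
    using finA1 finA2 by (intro measure_UNION_le) auto
  also have "\<dots> \<le> (\<Sum>x\<in>A1 \<times> A2. F (card (fst x)) (card (snd x)))"
    using inner by (intro sum_mono) auto
  also have "\<dots> = (\<Sum>S1\<in>A1. \<Sum>S2\<in>A2. F (card S1) (card S2))"
    unfolding sum.cartesian_product by (intro sum.cong) auto
  also have "\<dots> = (\<Sum>S1\<in>A1. \<Sum>b\<le>Kb. real (n2 choose b) * F (card S1) b)"
    unfolding A2_def using sum_subsets_card[of "{..<n2}" "\<lambda>b. F _ b" Kb] by simp
  also have "\<dots> = (\<Sum>a\<le>Ma. real (n1 choose a) * (\<Sum>b\<le>Kb. real (n2 choose b) * F a b))"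
    unfolding A1_def using sum_subsets_card[of "{..<n1}" "\<lambda>a. \<Sum>b\<le>Kb. real (n2 choose b) * F a b" Ma] by simp
  also have "\<dots> = (\<Sum>a\<le>Ma. \<Sum>b\<le>Kb. real (n1 choose a) * real (n2 choose b) * F a b)"
    by (simp add: sum_distrib_left mult_ac)
  also have "\<dots> \<le> (\<Sum>a\<le>Ma. \<Sum>b\<le>Kb. real (a + b) * (real a * real b) ^ 2 * p * exp (2 * p * real a * real b))"
    unfolding F_def using term_bound[OF p] by (intro sum_mono) auto
  finally show ?thesis unfolding M_def bad_def .
qed



lemma final_sum_bound:
  fixes L c p :: real and Ma Kb :: nat
  assumes "real Ma \<le> L" "real Kb \<le> c * L" "0 \<le> p"
  shows "(\<Sum>a\<le>Ma. \<Sum>b\<le>Kb. real (a + b) * (real a * real b) ^ 2 * p * exp (2 * p * real a * real b))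
     \<le> (L + 1) * (c * L + 1) * ((L + c * L) * (L * (c * L)) ^ 2 * p * exp (2 * p * L * (c * L)))"
proof -
  define Tm where "Tm = (L + c * L) * (L * (c * L)) ^ 2 * p * exp (2 * p * L * (c * L))"
  have L0: "0 \<le> L" using assms(1) by (meson of_nat_0_le_iff order_trans)
  have cL0: "0 \<le> c * L" using assms(2) by (meson of_nat_0_le_iff order_trans)
  have T: "real (a + b) * (real a * real b) ^ 2 * p * exp (2 * p * real a * real b) \<le> Tm"
    if a: "a \<le> Ma" and b: "b \<le> Kb" for a b
  proof -
    have ra: "real a \<le> L" using a assms(1) by (meson of_nat_le_iff order_trans)
    have rb: "real b \<le> c * L" using b assms(2) by (meson of_nat_le_iff order_trans)
    have 1: "real (a + b) \<le> L + c * L" using ra rb by simp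
    have 2: "(real a * real b) ^ 2 \<le> (L * (c * L)) ^ 2"
      using ra rb by (intro power_mono mult_mono) auto
    have 3: "exp (2 * p * real a * real b) \<le> exp (2 * p * L * (c * L))"
    proof -
      have "real a * real b \<le> L * (c * L)" using ra rb by (intro mult_mono) auto
      then have "2 * p * (real a * real b) \<le> 2 * p * (L * (c * L))"
        using assms(3) by (intro mult_left_mono) auto
      then show ?thesis by (simp add: mult.assoc)
    qed
    have "real (a + b) * (real a * real b) ^ 2 * p * exp (2 * p * real a * real b)
        \<le> (L + c * L) * (L * (c * L)) ^ 2 * p * exp (2 * p * L * (c * L))"
      using 1 2 3 assms(3) L0 cL0 by (intro mult_mono) auto
    then show ?thesis by (simp add: Tm_def)
  qed
  have "(\<Sum>a\<le>Ma. \<Sum>b\<le>Kb. real (a + b) * (real a * real b) ^ 2 * p * exp (2 * p * real a * real b))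
      \<le> (\<Sum>a\<le>Ma. \<Sum>b\<le>Kb. Tm)"
    using T by (intro sum_mono) auto
  also have "\<dots> = (real Ma + 1) * ((real Kb + 1) * Tm)" by (simp add: algebra_simps)
  also have "\<dots> \<le> (L + 1) * ((c * L + 1) * Tm)"
  proof -
    have Tm0: "0 \<le> Tm" using assms(3) L0 cL0 by (simp add: Tm_def)
    show ?thesis using assms(1,2) Tm0 L0 cL0 by (intro mult_mono) auto
  qed
  finally show ?thesis by (simp add: Tm_def mult_ac)
qed

lemma per_k_bound:
  fixes lam d b0 :: real and n1 n2 :: nat and p :: real
  assumes lam: "0 < lam" and d: "d > 1" and b0: "b0 > 0"
    and rel: "real n1 = lam * real n2" and pdef: "p = d / sqrt (real n1 * real n2)"
    and big: "real n1 \<ge> max 1 (d * sqrt lam)"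
  shows "measure_pmf.prob (Gbip n1 n2 p) {E. \<exists>C \<in> bip_components n1 n2 E.
                 is_small b0 n1 C \<and> is_balanced p n2 C \<and> is_complex E C}
    \<le> (b0 * ln (real n1) ^ 2 + 1) * ((2 * d / sqrt lam) * (b0 * ln (real n1) ^ 2) + 1) *
       ((b0 * ln (real n1) ^ 2 + (2 * d / sqrt lam) * (b0 * ln (real n1) ^ 2)) *
        (b0 * ln (real n1) ^ 2 * ((2 * d / sqrt lam) * (b0 * ln (real n1) ^ 2))) ^ 2 *
        ((d * sqrt lam) / real n1) *
        exp (2 * ((d * sqrt lam) / real n1) * (b0 * ln (real n1) ^ 2) * ((2 * d / sqrt lam) * (b0 * ln (real n1) ^ 2))))"
proof -
  define x where "x = real n1"
  define c where "c = 2 * d / sqrt lam"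
  define q where "q = d * sqrt lam"
  define L where "L = b0 * ln x ^ 2"
  have sl: "sqrt lam > 0" using lam by simp
  have sl2: "sqrt lam * sqrt lam = lam" using lam by simp
  have x1: "x \<ge> 1" "x \<ge> q" using big unfolding x_def q_def by auto
  have xpos: "x > 0" using x1 by simp
  have n2r: "real n2 = x / lam" using rel lam unfolding x_def by (simp add: field_simps)
  have sq: "sqrt (x * real n2) = x / sqrt lam"
  proof (rule real_sqrt_unique)
    show "(x / sqrt lam)\<^sup>2 = x * real n2" using lam unfolding n2r by (simp add: power2_eq_square field_simps)
    show "0 \<le> x / sqrt lam" using xpos sl by simp
  qed
  have pq: "p = q / x" unfolding pdef x_def[symmetric] sq q_def using sl xpos by (simp add: field_simps)
  have p0: "0 \<le> p" and p1: "p \<le> 1" using xpos x1 d sl unfolding pq q_def by (auto simp: field_simps)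
  have c2: "2 * p * real n2 = c"
    unfolding pq n2r c_def q_def using xpos lam sl sl2 by (simp add: field_simps)
  have c0: "0 \<le> c" using d sl unfolding c_def by simp
  have L0: "0 \<le> L" using b0 unfolding L_def by simp
  define Ma where "Ma = nat \<lfloor>L\<rfloor>"
  define Kb where "Kb = nat \<lfloor>c * L\<rfloor>"
  have Ma: "real Ma \<le> L" unfolding Ma_def using L0 by simp
  have Kb: "real Kb \<le> c * L" unfolding Kb_def using L0 c0 by simp
  have subs: "{E. \<exists>C \<in> bip_components n1 n2 E. is_small b0 n1 C \<and> is_balanced p n2 C \<and> is_complex E C}
     \<subseteq> {E. \<exists>C\<in>bip_components n1 n2 E. card (part1 C) \<le> Ma \<and> card (part2 C) \<le> Kb \<and> is_complex E C}"
  proof (intro subsetI CollectI, elim CollectE bexE conjE)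
    fix E C assume C: "C \<in> bip_components n1 n2 E" and sm: "is_small b0 n1 C"
      and bal: "is_balanced p n2 C" and cx: "is_complex E C"
    have a: "real (card (part1 C)) \<le> L" using sm unfolding is_small_def L_def x_def .
    have "real (card (part2 C)) \<le> c * real (card (part1 C))"
      using bal c2 unfolding is_balanced_def by simp
    also have "\<dots> \<le> c * L" using a c0 by (intro mult_left_mono) auto
    finally have b: "real (card (part2 C)) \<le> c * L" .
    have "card (part1 C) \<le> Ma" unfolding Ma_def by (rule le_nat_floor[OF a])
    moreover have "card (part2 C) \<le> Kb" unfolding Kb_def by (rule le_nat_floor[OF b])
    ultimately show "\<exists>C\<in>bip_components n1 n2 E. card (part1 C) \<le> Ma \<and> card (part2 C) \<le> Kb \<and> is_complex E C"
      using C cx by blast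
  qed
  have "measure_pmf.prob (Gbip n1 n2 p) {E. \<exists>C \<in> bip_components n1 n2 E.
                 is_small b0 n1 C \<and> is_balanced p n2 C \<and> is_complex E C}
     \<le> measure_pmf.prob (Gbip n1 n2 p) {E. \<exists>C\<in>bip_components n1 n2 E. card (part1 C) \<le> Ma \<and> card (part2 C) \<le> Kb \<and> is_complex E C}"
    using subs by (intro measure_pmf.finite_measure_mono) auto
  also have "\<dots> \<le> (\<Sum>a\<le>Ma. \<Sum>b\<le>Kb. real (a + b) * (real a * real b) ^ 2 * p * exp (2 * p * real a * real b))"
    by (rule bad_bound[OF p0 p1])
  also have "\<dots> \<le> (L + 1) * (c * L + 1) * ((L + c * L) * (L * (c * L)) ^ 2 * p * exp (2 * p * L * (c * L)))"
    by (rule final_sum_bound[OF Ma Kb p0])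
  finally show ?thesis unfolding L_def c_def pq q_def x_def .
qed

theorem lemma4p7:
  fixes lam d \<beta>0 :: real and n1 n2 :: "nat \<Rightarrow> nat" and p :: "nat \<Rightarrow> real"
  assumes "0 < lam" and "lam \<le> 1" and "d > 1"
    and "filterlim n1 at_top sequentially"
    and "\<And>k. real (n1 k) = lam * real (n2 k)"
    and "\<And>k. p k = d / sqrt (real (n1 k) * real (n2 k))"
    and "\<beta>0 > 0" and "johansson_gap \<beta>0 n1 n2 p"
  shows "whp (\<lambda>k. Gbip (n1 k) (n2 k) (p k)) (\<lambda>k E.
           \<not> (\<exists>C \<in> bip_components (n1 k) (n2 k) E.
                 is_small \<beta>0 (n1 k) C \<and> is_balanced (p k) (n2 k) C \<and> is_complex E C))"
proof -
  define c where "c = 2 * d / sqrt lam"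
  define q where "q = d * sqrt lam"
  define Bnd where "Bnd x = (\<beta>0 * ln x ^ 2 + 1) * (c * (\<beta>0 * ln x ^ 2) + 1) *
       ((\<beta>0 * ln x ^ 2 + c * (\<beta>0 * ln x ^ 2)) *
        (\<beta>0 * ln x ^ 2 * (c * (\<beta>0 * ln x ^ 2))) ^ 2 * (q / x) *
        exp (2 * (q / x) * (\<beta>0 * ln x ^ 2) * (c * (\<beta>0 * ln x ^ 2))))" for x :: real
  define Bad where "Bad k = {E. \<exists>C \<in> bip_components (n1 k) (n2 k) E.
                 is_small \<beta>0 (n1 k) C \<and> is_balanced (p k) (n2 k) C \<and> is_complex E C}" for k
  have sl: "sqrt lam > 0" using assms(1) by simp
  have cpos: "c > 0" unfolding c_def using assms(3) sl by simp
  have qpos: "q > 0" unfolding q_def using assms(3) sl by simp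
  have lim: "(Bnd \<longlongrightarrow> 0) at_top"
    unfolding Bnd_def using assms(7) cpos qpos by real_asymp
  have xlim: "filterlim (\<lambda>k. real (n1 k)) at_top sequentially"
    by (rule filterlim_compose[OF filterlim_real_sequentially assms(4)])
  have glim: "((\<lambda>k. Bnd (real (n1 k))) \<longlongrightarrow> 0) sequentially"
    by (rule filterlim_compose[OF lim xlim])
  have ev: "eventually (\<lambda>k. real (n1 k) \<ge> max 1 (d * sqrt lam)) sequentially"
    using xlim unfolding filterlim_at_top by (rule spec)
  have evb: "eventually (\<lambda>k. measure_pmf.prob (Gbip (n1 k) (n2 k) (p k)) (Bad k) \<le> Bnd (real (n1 k))) sequentially"
    using ev
  proof (rule eventually_mono)
    fix k assume "real (n1 k) \<ge> max 1 (d * sqrt lam)"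
    from per_k_bound[OF assms(1) assms(3) assms(7) assms(5)[of k] assms(6)[of k] this]
    show "measure_pmf.prob (Gbip (n1 k) (n2 k) (p k)) (Bad k) \<le> Bnd (real (n1 k))"
      unfolding Bad_def Bnd_def c_def q_def .
  qed
  have badlim: "((\<lambda>k. measure_pmf.prob (Gbip (n1 k) (n2 k) (p k)) (Bad k)) \<longlongrightarrow> 0) sequentially"
    by (rule tendsto_sandwich[OF _ evb tendsto_const glim]) simp
  have compl: "measure_pmf.prob (Gbip (n1 k) (n2 k) (p k)) {E. \<not> (\<exists>C \<in> bip_components (n1 k) (n2 k) E.
                 is_small \<beta>0 (n1 k) C \<and> is_balanced (p k) (n2 k) C \<and> is_complex E C)}
      = 1 - measure_pmf.prob (Gbip (n1 k) (n2 k) (p k)) (Bad k)" for k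
  proof -
    have "{E. \<not> (\<exists>C \<in> bip_components (n1 k) (n2 k) E.
                 is_small \<beta>0 (n1 k) C \<and> is_balanced (p k) (n2 k) C \<and> is_complex E C)}
          = space (measure_pmf (Gbip (n1 k) (n2 k) (p k))) - Bad k"
      unfolding Bad_def by auto
    then show ?thesis using measure_pmf.prob_compl[of "Bad k" "Gbip (n1 k) (n2 k) (p k)"] by simp
  qed
  show ?thesis
    unfolding whp_def compl
    using tendsto_diff[OF tendsto_const[of 1] badlim] by simp
qed

end
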